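(* Let $\Gamma(t)$ be a differentiable motion of nondegenerate oriented m-triangles with constant angular momentum $\mathbf\Omega$, and let $\mathfrak F(t)=(\mathbf u_1(t),\mathbf u_2(t),\mathbf n(t))$ be a continuously varying moving eigenframe. Then the functions $$g_1=\mathbf\Omega\cdot\mathbf u_1,\quad g_2=\mathbf\Omega\cdot\mathbf u_2,\quad g_3=\mathbf\Omega\cdot\mathbf n$$ satisfy $$\dot g_1=g_2\Big[\Big(\frac1{\lambda_3}-\frac1{\lambda_2}\Big)g_3+\frac12\dot\theta\cos\varphi\Big],\quad \dot g_2=g_1\Big[\Big(\frac1{\lambda_1}-\frac1{\lambda_3}\Big)g_3-\frac12\dot\theta\cos\varphi\Big],\quad \dot g_3=g_1g_2\Big(\frac1{\lambda_2}-\frac1{\lambda_1}\Big),$$ where $\lambda_1(t),\lambda_2(t),\lambda_3(t)$ are the eigenvalues of the inertia tensor of $\Gamma(t)$ associated with $\mathbf u_1,\mathbf u_2,\mathbf n$, and these depend solely on the moduli curve $\bar\Gamma(t)=(\rho(t),\varphi(t),\theta(t))$.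
   Context: Masses $m_1,m_2,m_3>0$, $m_1+m_2+m_3=1$. An oriented m-triangle is $(\mathbf X,\mathbf n)$, $\mathbf X=(\mathbf a_1,\mathbf a_2,\mathbf a_3)$, $\mathbf a_i\in\mathbb R^3$, $\sum m_i\mathbf a_i=0$, $\mathbf n$ a unit vector perpendicular to the $\mathbf a_i$; nondegenerate means the $\mathbf a_i$ span a plane. Angular momentum: $\mathbf\Omega=\sum m_i\mathbf a_i\times\dot{\mathbf a}_i$. Inertia tensor: $B_{\mathbf X}(\mathbf u,\mathbf v)=\sum m_j(\mathbf u\times\mathbf a_j)\cdot(\mathbf v\times\mathbf a_j)$. An eigenframe is a positive orthonormal frame $(\mathbf u_1,\mathbf u_2,\mathbf n)$ with $\mathbf u_1,\mathbf u_2$ in the plane of the triangle, $\mathbf u_1\times\mathbf u_2=\mathbf n$, consisting of eigenvectors of $B_{\mathbf X}$; $\lambda_i=B_{\mathbf X}(\mathbf u_i,\mathbf u_i)$ for $i=1,2$ and $\lambda_3=B_{\mathbf X}(\mathbf n,\mathbf n)=I=\sum m_i|\mathbf a_i|^2=\rho^2$; one has $\{\lambda_1,\lambda_2\}=\frac I2(1\pm\sin\varphi)$. Here $(\varphi,\theta)$ are spherical coordinates on the shape space (oriented m-triangles of size $I=1$ modulo rotation, a round sphere with the kinematic metric $\frac14(d\varphi^2+\sin^2\varphi\,d\theta^2)$): $\varphi$ is the colatitude measured from the north pole, which is the shape of the positively oriented m-triangle with $I_j=m_j|\mathbf a_j|^2=(1-m_j)/2$, and $\theta$ is the longitude, increasing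 in the positive direction of the equator (collinear shapes) as oriented by the northern hemisphere of positively oriented shapes. The moduli curve $\bar\Gamma$ is the image of $\Gamma$ modulo rotations, described by $(\rho,\varphi,\theta)$. *)

theory Defs
  imports "HOL-Analysis.Analysis"
begin

unbundle cross3_syntax

definition oriented_mtriangle ::
  "real \<Rightarrow> real \<Rightarrow> real \<Rightarrow> real^3 \<Rightarrow> real^3 \<Rightarrow> real^3 \<Rightarrow> real^3 \<Rightarrow> bool" where
  "oriented_mtriangle m1 m2 m3 a1 a2 a3 n \<longleftrightarrow>
     m1 *\<^sub>R a1 + m2 *\<^sub>R a2 + m3 *\<^sub>R a3 = 0 \<and> norm n = 1 \<and>
     n \<bullet> a1 = 0 \<and> n \<bullet> a2 = 0 \<and> n \<bullet> a3 = 0"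

definition nondegenerate :: "real^3 \<Rightarrow> real^3 \<Rightarrow> real^3 \<Rightarrow> bool" where
  "nondegenerate a1 a2 a3 \<longleftrightarrow> dim (span {a1, a2, a3}) = 2"

definition ang_mom ::
  "real \<Rightarrow> real \<Rightarrow> real \<Rightarrow> real^3 \<Rightarrow> real^3 \<Rightarrow> real^3 \<Rightarrow> real^3 \<Rightarrow> real^3 \<Rightarrow> real^3 \<Rightarrow> real^3" where
  "ang_mom m1 m2 m3 a1 a2 a3 v1 v2 v3 =
     m1 *\<^sub>R (a1 \<times> v1) + m2 *\<^sub>R (a2 \<times> v2) + m3 *\<^sub>R (a3 \<times> v3)"

definition inertia_tensor ::
  "real \<Rightarrow> real \<Rightarrow> real \<Rightarrow> real^3 \<Rightarrow> real^3 \<Rightarrow> real^3 \<Rightarrow> real^3 \<Rightarrow> real^3 \<Rightarrow> real" where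
  "inertia_tensor m1 m2 m3 a1 a2 a3 u v =
     m1 * ((u \<times> a1) \<bullet> (v \<times> a1)) + m2 * ((u \<times> a2) \<bullet> (v \<times> a2)) + m3 * ((u \<times> a3) \<bullet> (v \<times> a3))"

definition moment_of_inertia ::
  "real \<Rightarrow> real \<Rightarrow> real \<Rightarrow> real^3 \<Rightarrow> real^3 \<Rightarrow> real^3 \<Rightarrow> real" where
  "moment_of_inertia m1 m2 m3 a1 a2 a3 = m1 * (norm a1)\<^sup>2 + m2 * (norm a2)\<^sup>2 + m3 * (norm a3)\<^sup>2"

text \<open>u is an eigenvector (with eigenvalue l) of the symmetric bilinear form B,
  i.e. of the associated self-adjoint operator w.r.t. the dot product.\<close>
definition is_eigvec :: "(real^3 \<Rightarrow> real^3 \<Rightarrow> real) \<Rightarrow> real^3 \<Rightarrow> real \<Rightarrow> bool" where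
  "is_eigvec B u l \<longleftrightarrow> u \<noteq> 0 \<and> (\<forall>v. B u v = l * (u \<bullet> v))"

definition eigenframe ::
  "real \<Rightarrow> real \<Rightarrow> real \<Rightarrow> real^3 \<Rightarrow> real^3 \<Rightarrow> real^3 \<Rightarrow> real^3 \<Rightarrow> real^3 \<Rightarrow> real^3 \<Rightarrow> bool" where
  "eigenframe m1 m2 m3 a1 a2 a3 u1 u2 n \<longleftrightarrow>
     norm u1 = 1 \<and> norm u2 = 1 \<and> norm n = 1 \<and>
     u1 \<bullet> u2 = 0 \<and> u1 \<bullet> n = 0 \<and> u2 \<bullet> n = 0 \<and> u1 \<times> u2 = n \<and>
     u1 \<in> span {a1, a2, a3} \<and> u2 \<in> span {a1, a2, a3} \<and>
     (\<exists>l. is_eigvec (inertia_tensor m1 m2 m3 a1 a2 a3) u1 l) \<and>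
     (\<exists>l. is_eigvec (inertia_tensor m1 m2 m3 a1 a2 a3) u2 l) \<and>
     (\<exists>l. is_eigvec (inertia_tensor m1 m2 m3 a1 a2 a3) n l)"

text \<open>Mass-weighted Jacobi vectors
  xi = sqrt(m1 m2/(m1+m2)) (a2 - a1),  eta = sqrt((m1+m2) m3) (a3 - (m1 a1 + m2 a2)/(m1+m2)),
  so that I = |xi|^2 + |eta|^2.  The (Hopf) shape point
  S = (|xi|^2 - |eta|^2, 2 xi.eta, 2 n.(xi \<times> eta)) has |S| = I; S/I is a model of the
  shape sphere (round, kinematic metric (1/4)(d\<phi>^2 + sin^2 \<phi> d\<theta>^2)) whose third axis
  points to the north pole (positively oriented shape with I_j = (1 - m_j)/2), the equator
  being the collinear shapes.  This fixes the longitude up to an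
  additive constant (choice of the meridian \<theta> = 0), which is irrelevant for \<theta>-dot.\<close>
definition jac_xi :: "real \<Rightarrow> real \<Rightarrow> real^3 \<Rightarrow> real^3 \<Rightarrow> real^3" where
  "jac_xi m1 m2 a1 a2 = sqrt (m1 * m2 / (m1 + m2)) *\<^sub>R (a2 - a1)"

definition jac_eta :: "real \<Rightarrow> real \<Rightarrow> real \<Rightarrow> real^3 \<Rightarrow> real^3 \<Rightarrow> real^3 \<Rightarrow> real^3" where
  "jac_eta m1 m2 m3 a1 a2 a3 =
     sqrt ((m1 + m2) * m3) *\<^sub>R (a3 - (1 / (m1 + m2)) *\<^sub>R (m1 *\<^sub>R a1 + m2 *\<^sub>R a2))"

definition shape_coords ::
  "real \<Rightarrow> real \<Rightarrow> real \<Rightarrow> real^3 \<Rightarrow> real^3 \<Rightarrow> real^3 \<Rightarrow> real^3 \<Rightarrow> real \<Rightarrow> real \<Rightarrow> bool" where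
  "shape_coords m1 m2 m3 a1 a2 a3 n \<phi> \<theta> \<longleftrightarrow>
     (let xi = jac_xi m1 m2 a1 a2; eta = jac_eta m1 m2 m3 a1 a2 a3;
          I = moment_of_inertia m1 m2 m3 a1 a2 a3
      in 0 \<le> \<phi> \<and> \<phi> \<le> pi \<and>
         2 * (n \<bullet> (xi \<times> eta)) = I * cos \<phi> \<and>
         xi \<bullet> xi - eta \<bullet> eta = I * sin \<phi> * cos \<theta> \<and>
         2 * (xi \<bullet> eta) = I * sin \<phi> * sin \<theta>)"

end

theory Submission
  imports Defs
begin

unbundle cross3_syntax


lemma triple_swap: "((a::real^3) \<times> b) \<bullet> c = a \<bullet> (b \<times> c)"
  by (simp add: cross3_simps forall_3)

lemma cross_cross_r: "(a::real^3) \<times> (b \<times> c) = (a \<bullet> c) *\<^sub>R b - (a \<bullet> b) *\<^sub>R c"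
  by (simp add: cross3_simps forall_3)

lemma cross_cross_l: "((a::real^3) \<times> b) \<times> c = (a \<bullet> c) *\<^sub>R b - (b \<bullet> c) *\<^sub>R a"
  by (simp add: cross3_simps forall_3)

lemma lagrange3: "((u::real^3) \<times> a) \<bullet> (w \<times> a) = (u \<bullet> w) * (a \<bullet> a) - (u \<bullet> a) * (w \<bullet> a)"
  by (simp add: cross3_simps forall_3)

lemma frame_facts:
  fixes u1 u2 n :: "real^3"
  assumes "norm u1 = 1" "norm u2 = 1" "u1 \<bullet> u2 = 0" "u1 \<times> u2 = n"
  shows "u1 \<bullet> u1 = 1" "u2 \<bullet> u2 = 1" "n \<bullet> n = 1" "u2 \<times> n = u1" "n \<times> u1 = u2"
    "u2 \<times> u1 = - n" "n \<times> u2 = - u1" "u1 \<times> n = - u2"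
    "u1 \<bullet> n = 0" "u2 \<bullet> n = 0"
    "\<And>c. c = (c \<bullet> u1) *\<^sub>R u1 + (c \<bullet> u2) *\<^sub>R u2 + (c \<bullet> n) *\<^sub>R n"
proof -
  show 1: "u1 \<bullet> u1 = 1" "u2 \<bullet> u2 = 1" using assms by (simp_all add: power2_norm_eq_inner[symmetric])
  have 0: "u2 \<bullet> u1 = 0" using assms by (simp add: inner_commute)
  show 2: "u2 \<times> n = u1" using assms(4)[symmetric] 1 0 by (simp add: cross_cross_r)
  show 3: "n \<times> u1 = u2" using assms(4)[symmetric] 1 0 by (simp add: cross_cross_l)
  show "n \<bullet> n = 1" using assms(4)[symmetric] 1 0
    by (simp add: triple_swap cross_cross_r)
  show "u2 \<times> u1 = - n" using assms(4) cross_skew by metis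
  show "n \<times> u2 = - u1" using 2 cross_skew by metis
  show "u1 \<times> n = - u2" using 3 cross_skew by metis
  show "u1 \<bullet> n = 0" "u2 \<bullet> n = 0" using assms(4) by (auto simp: dot_cross_self)
  fix c :: "real^3"
  define d where "d = c - ((c \<bullet> u1) *\<^sub>R u1 + (c \<bullet> u2) *\<^sub>R u2 + (c \<bullet> n) *\<^sub>R n)"
  have n1: "n \<bullet> n = 1" using assms(4)[symmetric] 1 0
    by (simp add: triple_swap cross_cross_r)
  have un: "u1 \<bullet> n = 0" "u2 \<bullet> n = 0" using assms(4) by (auto simp: dot_cross_self)
  have un': "n \<bullet> u1 = 0" "n \<bullet> u2 = 0" using un by (simp_all add: inner_commute)
  have d1: "u1 \<bullet> d = 0" "u2 \<bullet> d = 0" "n \<bullet> d = 0"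
    using 1 0 un un' n1 assms(3) by (simp_all add: d_def inner_diff_right inner_add_right inner_commute[of c])
  have "n \<times> d = 0" using d1 assms(4)[symmetric] by (simp add: cross_cross_l)
  hence "n \<times> (n \<times> d) = 0" by simp
  hence "d = 0" using d1 n1 by (simp add: cross_cross_r)
  thus "c = (c \<bullet> u1) *\<^sub>R u1 + (c \<bullet> u2) *\<^sub>R u2 + (c \<bullet> n) *\<^sub>R n" unfolding d_def right_minus_eq .
qed

lemma sign_local:
  fixes f g :: "real \<Rightarrow> 'a::real_normed_vector"
  assumes "isCont f t" "isCont g t" "g t \<noteq> 0"
    and ev: "eventually (\<lambda>s. f s = g s \<or> f s = - g s) (nhds t)"
  shows "eventually (\<lambda>s. f s = (if f t = g t then g s else - g s)) (nhds t)"
proof -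
  define e where "e = norm (g t)"
  have e: "e > 0" using assms(3) by (simp add: e_def)
  have "eventually (\<lambda>s. dist (f s) (f t) < e) (at t)" using assms(1) e by (simp add: isCont_def tendsto_iff)
  hence "eventually (\<lambda>s. s \<noteq> t \<longrightarrow> dist (f s) (f t) < e) (nhds t)" by (simp add: eventually_at_filter)
  hence "eventually (\<lambda>s. dist (f s) (f t) < e) (nhds t)" by (rule eventually_mono) (use e in auto)
  moreover have "eventually (\<lambda>s. dist (g s) (g t) < e) (at t)" using assms(2) e by (simp add: isCont_def tendsto_iff)
  hence "eventually (\<lambda>s. s \<noteq> t \<longrightarrow> dist (g s) (g t) < e) (nhds t)" by (simp add: eventually_at_filter)
  hence "eventually (\<lambda>s. dist (g s) (g t) < e) (nhds t)" by (rule eventually_mono) (use e in auto)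
  ultimately show ?thesis using ev
  proof eventually_elim
    case (elim s)
    have ft: "f t = g t \<or> f t = - g t" using eventually_nhds_x_imp_x[OF ev] .
    have A: "norm (g s + g t) > e"
    proof -
      have "g s + g t = 2 *\<^sub>R g t + (g s - g t)" by (simp add: algebra_simps scaleR_2)
      hence "norm (g s + g t) \<ge> norm (2 *\<^sub>R g t) - norm (g s - g t)"
        using norm_triangle_ineq4[of "g s + g t" "g s - g t"] by (simp add: scaleR_2)
      moreover have "norm (2 *\<^sub>R g t) = 2 * e" by (simp add: e_def)
      ultimately show ?thesis using elim(2) by (simp add: dist_norm)
    qed
    show ?case
    proof (cases "f t = g t")
      case True
      show ?thesis
      proof (cases "f s = g s")
        case False
        hence "f s = - g s" using elim by blast
        hence "f s - f t = - (g s + g t)" using True by simp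
        hence "dist (f s) (f t) = norm (g s + g t)" by (simp add: dist_norm del: minus_add_distrib)
        thus ?thesis using A elim(1) by simp
      qed (use True in simp)
    next
      case False
      hence ft': "f t = - g t" using ft by blast
      show ?thesis
      proof (cases "f s = - g s")
        case False
        hence "f s = g s" using elim by blast
        hence "f s - f t = g s + g t" using ft' by simp
        hence "dist (f s) (f t) = norm (g s + g t)" by (simp add: dist_norm)
        thus ?thesis using A elim(1) by simp
      qed (use False in simp)
    qed
  qed
qed

lemma deriv_zero_on:
  fixes F :: "real \<Rightarrow> real"
  assumes "open J" "t \<in> J" "\<And>s. s \<in> J \<Longrightarrow> F s = c" "(F has_real_derivative F') (at t)"
  shows "F' = 0"
proof -
  have "((\<lambda>s. c) has_real_derivative F') (at t)"
    using has_field_derivative_transform_within_open[OF assms(4) assms(1,2)] assms(3) by metis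
  thus ?thesis using DERIV_const DERIV_unique by blast
qed

lemma bb_cross: "bounded_bilinear (cross3 :: real^3 \<Rightarrow> real^3 \<Rightarrow> real^3)"
  using bilinear_cross bilinear_conv_bounded_bilinear by blast

lemma vd_cross:
  fixes f g :: "real \<Rightarrow> real^3"
  assumes "(f has_vector_derivative f') (at x)" "(g has_vector_derivative g') (at x)"
  shows "((\<lambda>s. f s \<times> g s) has_vector_derivative (f x \<times> g' + f' \<times> g x)) (at x)"
  using bounded_bilinear.has_vector_derivative[OF bb_cross assms] .

lemma vd_inner:
  fixes f g :: "real \<Rightarrow> real^3"
  assumes "(f has_vector_derivative f') (at x)" "(g has_vector_derivative g') (at x)"
  shows "((\<lambda>s. f s \<bullet> g s) has_real_derivative (f x \<bullet> g' + f' \<bullet> g x)) (at x)"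
  using bounded_bilinear.has_vector_derivative[OF bounded_bilinear_inner assms]
  by (simp add: has_real_derivative_iff_has_vector_derivative)

lemma vd_normalize:
  fixes f :: "real \<Rightarrow> real^3"
  assumes "(f has_vector_derivative f') (at x)" "f x \<noteq> 0"
  shows "\<exists>d. ((\<lambda>s. inverse (sqrt (f s \<bullet> f s)) *\<^sub>R f s) has_vector_derivative d) (at x)"
proof -
  have p: "f x \<bullet> f x > 0" using assms(2) by simp
  have 1: "((\<lambda>s. f s \<bullet> f s) has_real_derivative (f x \<bullet> f' + f' \<bullet> f x)) (at x)"
    using vd_inner[OF assms(1) assms(1)] .
  have 2: "((\<lambda>s. sqrt (f s \<bullet> f s)) has_real_derivative
     (inverse (sqrt (f x \<bullet> f x)) / 2 * (f x \<bullet> f' + f' \<bullet> f x))) (at x)"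
    by (rule DERIV_chain2[OF DERIV_real_sqrt[OF p] 1])
  have 3: "sqrt (f x \<bullet> f x) \<noteq> 0" using p by simp
  from DERIV_inverse_fun[OF 2 3] obtain d where
     "((\<lambda>s. inverse (sqrt (f s \<bullet> f s))) has_real_derivative d) (at x)" by blast
  from has_vector_derivative_scaleR[OF this assms(1)] show ?thesis by blast
qed

lemma span3_orth:
  fixes u a1 a2 a3 :: "real^3"
  assumes "u \<in> span {a1, a2, a3}" "u \<bullet> a1 = 0" "u \<bullet> a2 = 0" "u \<bullet> a3 = 0"
  shows "u = 0"
proof -
  have "orthogonal u u"
    using orthogonal_to_span[OF assms(1), of u] assms(2-4) by (auto simp: orthogonal_def)
  thus ?thesis by (simp add: orthogonal_self)
qed





lemma bil_sum:
  fixes h :: "real^3 \<Rightarrow> real^3 \<Rightarrow> 'c::real_vector"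
  assumes h: "bilinear h"
  shows "m1 *\<^sub>R h (p1 *\<^sub>R X + q1 *\<^sub>R E) b1 + m2 *\<^sub>R h (p2 *\<^sub>R X + q2 *\<^sub>R E) b2
       + m3 *\<^sub>R h (p3 *\<^sub>R X + q3 *\<^sub>R E) b3
     = h X ((m1*p1) *\<^sub>R b1 + (m2*p2) *\<^sub>R b2 + (m3*p3) *\<^sub>R b3)
       + h E ((m1*q1) *\<^sub>R b1 + (m2*q2) *\<^sub>R b2 + (m3*q3) *\<^sub>R b3)"
  by (simp add: bilinear_ladd[OF h] bilinear_lmul[OF h] bilinear_radd[OF h] bilinear_rmul[OF h]
      algebra_simps)

lemma jac_coeffs:
  fixes m1 m2 m3 :: real
  assumes m: "m1 > 0" "m2 > 0" "m3 > 0" "m1 + m2 + m3 = 1"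
  defines "c1 \<equiv> sqrt (m1 * m2 / (m1 + m2))" and "c2 \<equiv> sqrt ((m1 + m2) * m3)"
  shows "c1 > 0" "c2 > 0" "c1 * c1 = m1 * m2 / (m1 + m2)" "c2 * c2 = (m1 + m2) * m3"
    "m1 * (- m2 / ((m1 + m2) * c1)) = - c1" "m2 * (m1 / ((m1 + m2) * c1)) = c1"
    "m1 * (- m3 / c2) = - (c2 * (m1 / (m1 + m2)))"
    "m2 * (- m3 / c2) = - (c2 * (m2 / (m1 + m2)))"
    "m3 * ((m1 + m2) / c2) = c2"
proof -
  show c1: "c1 > 0" "c2 > 0" using m by (auto simp: c1_def c2_def)
  show s1: "c1 * c1 = m1 * m2 / (m1 + m2)" unfolding c1_def using m
    by (simp add: less_imp_le)
  show s2: "c2 * c2 = (m1 + m2) * m3" unfolding c2_def using m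
    by (simp add: less_imp_le)
  have mm: "m1 + m2 > 0" using m by simp
  have "m1 * (- m2 / ((m1 + m2) * c1)) = - (m1 * m2 / (m1 + m2)) / c1" by simp
  also have "\<dots> = - c1" using c1 by (simp add: s1[symmetric])
  finally show "m1 * (- m2 / ((m1 + m2) * c1)) = - c1" .
  have "m2 * (m1 / ((m1 + m2) * c1)) = (m1 * m2 / (m1 + m2)) / c1" by simp
  also have "\<dots> = c1" using c1 by (simp add: s1[symmetric])
  finally show "m2 * (m1 / ((m1 + m2) * c1)) = c1" .
  have s2': "m3 = c2 * c2 / (m1 + m2)" using s2 mm by (simp add: field_simps)
  show "m1 * (- m3 / c2) = - (c2 * (m1 / (m1 + m2)))" using c1 mm s2'

    by (simp add: field_simps)
  show "m2 * (- m3 / c2) = - (c2 * (m2 / (m1 + m2)))" using c1 mm s2' 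
    by (simp add: field_simps)
  show "m3 * ((m1 + m2) / c2) = c2" using c1 mm s2' 
    by (simp add: field_simps)
qed




lemma real_repr0:
  fixes m1 m2 m3 M x1 x2 x3 :: real
  assumes "M \<noteq> 0" "M = m1 + m2" "m1 * x1 + m2 * x2 + m3 * x3 = 0" "m1 + m2 + m3 = 1"
  shows "x1 = - m2 * (x2 - x1) / M + - m3 * (x3 - 1 / M * (m1 * x1 + m2 * x2))"
    "x2 = m1 * (x2 - x1) / M + - m3 * (x3 - 1 / M * (m1 * x1 + m2 * x2))"
    "x3 = M * (x3 - 1 / M * (m1 * x1 + m2 * x2))"
proof -
  show "x1 = - m2 * (x2 - x1) / M + - m3 * (x3 - 1 / M * (m1 * x1 + m2 * x2))"
    using assms(1) apply (simp add: field_simps) using assms(2-4) by algebra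
  show "x2 = m1 * (x2 - x1) / M + - m3 * (x3 - 1 / M * (m1 * x1 + m2 * x2))"
    using assms(1) apply (simp add: field_simps) using assms(2-4) by algebra
  show "x3 = M * (x3 - 1 / M * (m1 * x1 + m2 * x2))"
    using assms(1) apply (simp add: field_simps) using assms(2-4) by algebra
qed

lemma real_repr:
  fixes m1 m2 m3 c1 c2 x1 x2 x3 :: real
  assumes "m1 + m2 > 0" "c1 \<noteq> 0" "c2 \<noteq> 0" "m1 * x1 + m2 * x2 + m3 * x3 = 0" "m1 + m2 + m3 = 1"
  shows "x1 = (- m2 / ((m1 + m2) * c1)) * (c1 * (x2 - x1)) + (- m3 / c2) * (c2 * (x3 - 1 / (m1 + m2) * (m1 * x1 + m2 * x2)))"
    "x2 = (m1 / ((m1 + m2) * c1)) * (c1 * (x2 - x1)) + (- m3 / c2) * (c2 * (x3 - 1 / (m1 + m2) * (m1 * x1 + m2 * x2)))"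
    "x3 = 0 * (c1 * (x2 - x1)) + ((m1 + m2) / c2) * (c2 * (x3 - 1 / (m1 + m2) * (m1 * x1 + m2 * x2)))"
proof -
  have M: "m1 + m2 \<noteq> 0" using assms(1) by simp
  have e1: "(- m2 / ((m1 + m2) * c1)) * (c1 * (x2 - x1)) = - m2 * (x2 - x1) / (m1 + m2)"
    using assms(2) by simp
  have e2: "(m1 / ((m1 + m2) * c1)) * (c1 * (x2 - x1)) = m1 * (x2 - x1) / (m1 + m2)"
    using assms(2) by simp
  have e3: "(- m3 / c2) * (c2 * y) = - m3 * y" for y using assms(3) by simp
  have e4: "((m1 + m2) / c2) * (c2 * y) = (m1 + m2) * y" for y using assms(3) by simp
  note r = real_repr0[OF M refl assms(4,5)]
  show "x1 = (- m2 / ((m1 + m2) * c1)) * (c1 * (x2 - x1)) + (- m3 / c2) * (c2 * (x3 - 1 / (m1 + m2) * (m1 * x1 + m2 * x2)))"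
    unfolding e1 e3 by (rule r(1))
  show "x2 = (m1 / ((m1 + m2) * c1)) * (c1 * (x2 - x1)) + (- m3 / c2) * (c2 * (x3 - 1 / (m1 + m2) * (m1 * x1 + m2 * x2)))"
    unfolding e2 e3 by (rule r(2))
  show "x3 = 0 * (c1 * (x2 - x1)) + ((m1 + m2) / c2) * (c2 * (x3 - 1 / (m1 + m2) * (m1 * x1 + m2 * x2)))"
    unfolding e4 using r(3) by simp
qed





lemma jac_repr:
  fixes m1 m2 m3 :: real and a1 a2 a3 :: "real^3"
  assumes m: "m1 > 0" "m2 > 0" "m3 > 0" "m1 + m2 + m3 = 1"
    and com: "m1 *\<^sub>R a1 + m2 *\<^sub>R a2 + m3 *\<^sub>R a3 = 0"
  defines "c1 \<equiv> sqrt (m1 * m2 / (m1 + m2))" and "c2 \<equiv> sqrt ((m1 + m2) * m3)"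
  shows "a1 = (- m2 / ((m1 + m2) * c1)) *\<^sub>R jac_xi m1 m2 a1 a2 + (- m3 / c2) *\<^sub>R jac_eta m1 m2 m3 a1 a2 a3"
    "a2 = (m1 / ((m1 + m2) * c1)) *\<^sub>R jac_xi m1 m2 a1 a2 + (- m3 / c2) *\<^sub>R jac_eta m1 m2 m3 a1 a2 a3"
    "a3 = 0 *\<^sub>R jac_xi m1 m2 a1 a2 + ((m1 + m2) / c2) *\<^sub>R jac_eta m1 m2 m3 a1 a2 a3"
proof -
  have c: "c1 > 0" "c2 > 0" using jac_coeffs(1,2)[OF m] by (simp_all add: c1_def c2_def)
  have mm: "m1 + m2 > 0" using m by auto
  have comi: "m1 * a1 $ i + m2 * a2 $ i + m3 * a3 $ i = 0" for i
    using com by (simp add: vec_eq_iff)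
  have cn: "c1 \<noteq> 0" "c2 \<noteq> 0" using c by auto
  note r = real_repr[OF mm cn comi m(4)]
  show "a1 = (- m2 / ((m1 + m2) * c1)) *\<^sub>R jac_xi m1 m2 a1 a2 + (- m3 / c2) *\<^sub>R jac_eta m1 m2 m3 a1 a2 a3"
    unfolding vec_eq_iff jac_xi_def jac_eta_def c1_def[symmetric] c2_def[symmetric]
    using r(1) cn by simp
  show "a2 = (m1 / ((m1 + m2) * c1)) *\<^sub>R jac_xi m1 m2 a1 a2 + (- m3 / c2) *\<^sub>R jac_eta m1 m2 m3 a1 a2 a3"
    unfolding vec_eq_iff jac_xi_def jac_eta_def c1_def[symmetric] c2_def[symmetric]
    using r(2) cn by simp
  show "a3 = 0 *\<^sub>R jac_xi m1 m2 a1 a2 + ((m1 + m2) / c2) *\<^sub>R jac_eta m1 m2 m3 a1 a2 a3"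
    unfolding vec_eq_iff jac_xi_def jac_eta_def c1_def[symmetric] c2_def[symmetric]
    using r(3) cn by simp
qed

lemma jac_sums:
  fixes m1 m2 m3 :: real and b1 b2 b3 :: "real^3"
  assumes m: "m1 > 0" "m2 > 0" "m3 > 0" "m1 + m2 + m3 = 1"
  defines "c1 \<equiv> sqrt (m1 * m2 / (m1 + m2))" and "c2 \<equiv> sqrt ((m1 + m2) * m3)"
  shows "jac_xi m1 m2 b1 b2 = (m1 * (- m2 / ((m1 + m2) * c1))) *\<^sub>R b1 + (m2 * (m1 / ((m1 + m2) * c1))) *\<^sub>R b2 + (m3 * 0) *\<^sub>R b3"
    "jac_eta m1 m2 m3 b1 b2 b3 = (m1 * (- m3 / c2)) *\<^sub>R b1 + (m2 * (- m3 / c2)) *\<^sub>R b2 + (m3 * ((m1 + m2) / c2)) *\<^sub>R b3"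
proof -
  note jc = jac_coeffs[OF m, folded c1_def c2_def]
  show "jac_xi m1 m2 b1 b2 = (m1 * (- m2 / ((m1 + m2) * c1))) *\<^sub>R b1 + (m2 * (m1 / ((m1 + m2) * c1))) *\<^sub>R b2 + (m3 * 0) *\<^sub>R b3"
    unfolding jc(5,6) jac_xi_def c1_def[symmetric] by (simp add: algebra_simps)
  show "jac_eta m1 m2 m3 b1 b2 b3 = (m1 * (- m3 / c2)) *\<^sub>R b1 + (m2 * (- m3 / c2)) *\<^sub>R b2 + (m3 * ((m1 + m2) / c2)) *\<^sub>R b3"
    unfolding jc(7,8,9) jac_eta_def c2_def[symmetric] by (simp add: algebra_simps)
qed

lemma jac_bil:
  fixes m1 m2 m3 :: real and a1 a2 a3 b1 b2 b3 :: "real^3"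
    and h :: "real^3 \<Rightarrow> real^3 \<Rightarrow> 'c::real_vector"
  assumes m: "m1 > 0" "m2 > 0" "m3 > 0" "m1 + m2 + m3 = 1"
    and com: "m1 *\<^sub>R a1 + m2 *\<^sub>R a2 + m3 *\<^sub>R a3 = 0"
    and h: "bilinear h"
  shows "m1 *\<^sub>R h a1 b1 + m2 *\<^sub>R h a2 b2 + m3 *\<^sub>R h a3 b3
     = h (jac_xi m1 m2 a1 a2) (jac_xi m1 m2 b1 b2) + h (jac_eta m1 m2 m3 a1 a2 a3) (jac_eta m1 m2 m3 b1 b2 b3)"
proof -
  note r = jac_repr[OF m com]
  have "m1 *\<^sub>R h a1 b1 + m2 *\<^sub>R h a2 b2 + m3 *\<^sub>R h a3 b3 =
    m1 *\<^sub>R h ((- m2 / ((m1 + m2) * sqrt (m1 * m2 / (m1 + m2)))) *\<^sub>R jac_xi m1 m2 a1 a2 + (- m3 / sqrt ((m1 + m2) * m3)) *\<^sub>R jac_eta m1 m2 m3 a1 a2 a3) b1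
  + m2 *\<^sub>R h ((m1 / ((m1 + m2) * sqrt (m1 * m2 / (m1 + m2)))) *\<^sub>R jac_xi m1 m2 a1 a2 + (- m3 / sqrt ((m1 + m2) * m3)) *\<^sub>R jac_eta m1 m2 m3 a1 a2 a3) b2
  + m3 *\<^sub>R h (0 *\<^sub>R jac_xi m1 m2 a1 a2 + ((m1 + m2) / sqrt ((m1 + m2) * m3)) *\<^sub>R jac_eta m1 m2 m3 a1 a2 a3) b3"
    using r by metis
  also have "\<dots> = h (jac_xi m1 m2 a1 a2) (jac_xi m1 m2 b1 b2) + h (jac_eta m1 m2 m3 a1 a2 a3) (jac_eta m1 m2 m3 b1 b2 b3)"
    by (simp only: bil_sum[OF h] jac_sums(1)[OF m, of b1 b2 b3, symmetric] jac_sums(2)[OF m, of b1 b2 b3, symmetric]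
      jac_sums(1)[OF m, of a1 a2 a3, symmetric] jac_sums(2)[OF m, of a1 a2 a3, symmetric])
  finally show ?thesis .
qed





lemma bil_inner: "bilinear (\<lambda>x y. (x::real^3) \<bullet> y)"
  by (auto simp: bilinear_def linear_iff inner_add_left inner_add_right)

lemma bil_uw: "bilinear (\<lambda>x y. (u \<bullet> (x::real^3)) * (w \<bullet> (y::real^3)))"
  by (auto simp: bilinear_def linear_iff inner_add_right algebra_simps)

lemma static:
  fixes m1 m2 m3 :: real and a1 a2 a3 v1 v2 v3 :: "real^3"
  assumes m: "m1 > 0" "m2 > 0" "m3 > 0" "m1 + m2 + m3 = 1"
    and com: "m1 *\<^sub>R a1 + m2 *\<^sub>R a2 + m3 *\<^sub>R a3 = 0"
  defines "X \<equiv> jac_xi m1 m2 a1 a2" and "E \<equiv> jac_eta m1 m2 m3 a1 a2 a3"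
  shows "moment_of_inertia m1 m2 m3 a1 a2 a3 = X \<bullet> X + E \<bullet> E"
    "\<And>u w. m1 * ((u \<bullet> a1) * (w \<bullet> a1)) + m2 * ((u \<bullet> a2) * (w \<bullet> a2)) + m3 * ((u \<bullet> a3) * (w \<bullet> a3))
        = (u \<bullet> X) * (w \<bullet> X) + (u \<bullet> E) * (w \<bullet> E)"
    "\<And>u w. inertia_tensor m1 m2 m3 a1 a2 a3 u w = (u \<bullet> w) * (X \<bullet> X + E \<bullet> E) - ((u \<bullet> X) * (w \<bullet> X) + (u \<bullet> E) * (w \<bullet> E))"
    "ang_mom m1 m2 m3 a1 a2 a3 v1 v2 v3 = X \<times> jac_xi m1 m2 v1 v2 + E \<times> jac_eta m1 m2 m3 v1 v2 v3"
proof -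
  have I: "m1 * (a1 \<bullet> a1) + m2 * (a2 \<bullet> a2) + m3 * (a3 \<bullet> a3) = X \<bullet> X + E \<bullet> E"
    using jac_bil[OF m com bil_inner, of a1 a2 a3] by (simp add: X_def E_def)
  thus "moment_of_inertia m1 m2 m3 a1 a2 a3 = X \<bullet> X + E \<bullet> E"
    by (simp add: moment_of_inertia_def power2_norm_eq_inner)
  show K: "m1 * ((u \<bullet> a1) * (w \<bullet> a1)) + m2 * ((u \<bullet> a2) * (w \<bullet> a2)) + m3 * ((u \<bullet> a3) * (w \<bullet> a3))
        = (u \<bullet> X) * (w \<bullet> X) + (u \<bullet> E) * (w \<bullet> E)" for u w
    using jac_bil[OF m com bil_uw, of u w a1 a2 a3] by (simp add: X_def E_def)
  show "inertia_tensor m1 m2 m3 a1 a2 a3 u w = (u \<bullet> w) * (X \<bullet> X + E \<bullet> E) - ((u \<bullet> X) * (w \<bullet> X) + (u \<bullet> E) * (w \<bullet> E))" for u w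
    unfolding inertia_tensor_def lagrange3 K[symmetric] I[symmetric]
    by (simp add: algebra_simps)
  show "ang_mom m1 m2 m3 a1 a2 a3 v1 v2 v3 = X \<times> jac_xi m1 m2 v1 v2 + E \<times> jac_eta m1 m2 m3 v1 v2 v3"
    using jac_bil[OF m com bilinear_cross, of v1 v2 v3] by (simp add: X_def E_def ang_mom_def)
qed





lemma unit_sign:
  fixes u :: "real^3"
  assumes "norm u = 1" "\<mu> \<noteq> 0"
  shows "u = inverse (sqrt ((\<mu> *\<^sub>R u) \<bullet> (\<mu> *\<^sub>R u))) *\<^sub>R (\<mu> *\<^sub>R u) \<or>
         u = - (inverse (sqrt ((\<mu> *\<^sub>R u) \<bullet> (\<mu> *\<^sub>R u))) *\<^sub>R (\<mu> *\<^sub>R u))"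
proof -
  have uu: "u \<bullet> u = 1" using assms(1) by (simp add: power2_norm_eq_inner[symmetric])
  have "(\<mu> *\<^sub>R u) \<bullet> (\<mu> *\<^sub>R u) = \<mu>\<^sup>2" using uu by (simp add: power2_eq_square)
  hence e: "inverse (sqrt ((\<mu> *\<^sub>R u) \<bullet> (\<mu> *\<^sub>R u))) *\<^sub>R (\<mu> *\<^sub>R u) = (\<mu> / \<bar>\<mu>\<bar>) *\<^sub>R u"
    by (simp add: divide_inverse mult.commute)
  show ?thesis unfolding e using assms(2) by (cases "\<mu> > 0") auto
qed

lemma sign_deriv:
  fixes f g :: "real \<Rightarrow> 'a::real_normed_vector"
  assumes "isCont f t" "(g has_vector_derivative g') (at t)" "g t \<noteq> 0"
    and "eventually (\<lambda>s. f s = g s \<or> f s = - g s) (nhds t)"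
  shows "\<exists>f'. (f has_vector_derivative f') (at t)"
proof -
  have cg: "isCont g t" using has_vector_derivative_continuous[OF assms(2)] by simp
  note ev = sign_local[OF assms(1) cg assms(3,4)]
  show ?thesis
  proof (cases "f t = g t")
    case True
    have "eventually (\<lambda>s. s \<in> UNIV \<longrightarrow> f s = g s) (nhds t)" using ev True by (auto elim: eventually_mono)
    hence "(f has_vector_derivative g') (at t within UNIV) = (g has_vector_derivative g') (at t within UNIV)"
      using True by (intro has_vector_derivative_cong_ev) auto
    thus ?thesis using assms(2) by auto
  next
    case False
    have "eventually (\<lambda>s. s \<in> UNIV \<longrightarrow> f s = - g s) (nhds t)" using ev False by (auto elim: eventually_mono)
    moreover have "f t = - g t" using ev False eventually_nhds_x_imp_x by fastforce
    ultimately have "(f has_vector_derivative - g') (at t within UNIV) = ((\<lambda>s. - g s) has_vector_derivative - g') (at t within UNIV)"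
      by (intro has_vector_derivative_cong_ev) auto
    moreover have "((\<lambda>s. - g s) has_vector_derivative - g') (at t)"
      using assms(2) by (rule has_vector_derivative_minus)
    ultimately show ?thesis by auto
  qed
qed

lemma ev_nonzero:
  fixes f :: "real \<Rightarrow> 'a::real_normed_vector"
  assumes "isCont f t" "f t \<noteq> 0"
  shows "eventually (\<lambda>s. f s \<noteq> 0) (nhds t)"
proof -
  have "eventually (\<lambda>s. f s \<noteq> 0) (at t)"
    using tendsto_imp_eventually_ne[of f "f t" "at t"] assms by (simp add: isCont_def)
  hence "eventually (\<lambda>s. s \<noteq> t \<longrightarrow> f s \<noteq> 0) (nhds t)" by (simp add: eventually_at_filter)
  thus ?thesis by (rule eventually_mono) (use assms(2) in auto)
qed

lemma key_poly:
  fixes x1 x2 y1 y2 p1 q1 p2 q2 :: real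
  assumes "x1 * y1 + x2 * y2 = 0"
  shows "(x1 * q1 - y1 * p1 + x2 * q2 - y2 * p2) * ((x1^2 + x2^2) - (y1^2 + y2^2))^2
     - ((x1^2 + x2^2) + (y1^2 + y2^2)) * ((x1^2 + x2^2) - (y1^2 + y2^2)) * (y1 * p1 + x1 * q1 + y2 * p2 + x2 * q2)
     + (x1 * y2 - y1 * x2) * ((x1^2 + y1^2 - (x2^2 + y2^2)) * (2 * (x1 * p2 + y1 * q2 + (p1 * x2 + q1 * y2)))
        - (2 * (x1 * x2 + y1 * y2)) * (2 * (x1 * p1 + y1 * q1) - 2 * (x2 * p2 + y2 * q2))) = 0"
  using assms by algebra

lemma disc_poly:
  fixes x1 x2 y1 y2 :: real
  assumes "x1 * y1 + x2 * y2 = 0"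
  shows "(x1^2 + y1^2 - (x2^2 + y2^2))^2 + (2 * (x1 * x2 + y1 * y2))^2 = ((x1^2 + x2^2) - (y1^2 + y2^2))^2"
  using assms by algebra




lemma final_alg:
  fixes x1 x2 y1 y2 p1 q1 p2 q2 r1 r2 a b \<beta> L1 L2 I g1 g2 g3 th' cphi dg1 dg2 dg3 :: real
  assumes orth: "x1 * y1 + x2 * y2 = 0"
    and L1: "L1 = y1\<^sup>2 + y2\<^sup>2" and L2: "L2 = x1\<^sup>2 + x2\<^sup>2" and pos: "L1 > 0" "L2 > 0"
    and I: "I = L1 + L2" and hnz: "L2 - L1 \<noteq> 0"
    and r1: "r1 = - (x1 * a + y1 * b)" and r2: "r2 = - (x2 * a + y2 * b)"
    and g1: "g1 = y1 * r1 + y2 * r2" and g2: "g2 = - (x1 * r1) - x2 * r2"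
    and g3: "g3 = x1 * q1 - y1 * p1 + (x2 * q2 - y2 * p2)"
    and D9: "(y1 * \<beta> + p1) * y1 + (- (x1 * \<beta>) + q1) * x1 + ((y2 * \<beta> + p2) * y2 + (- (x2 * \<beta>) + q2) * x2) = 0"
    and th: "(x1\<^sup>2 + y1\<^sup>2 - (x2\<^sup>2 + y2\<^sup>2)) * (2 * (x1 * p2 + y1 * q2 + (p1 * x2 + q1 * y2)))
        - (2 * (x1 * x2 + y1 * y2)) * (2 * (x1 * p1 + y1 * q1) - 2 * (x2 * p2 + y2 * q2)) = (L2 - L1)\<^sup>2 * th'"
    and cp: "2 * (x1 * y2 - y1 * x2) = I * cphi"
    and dg1: "dg1 = g2 * \<beta> - g3 * a" and dg2: "dg2 = - (g1 * \<beta>) - g3 * b" and dg3: "dg3 = g1 * a + g2 * b"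
  shows "dg1 = g2 * ((1 / I - 1 / L2) * g3 + 1 / 2 * th' * cphi)"
    "dg2 = g1 * ((1 / L1 - 1 / I) * g3 - 1 / 2 * th' * cphi)"
    "dg3 = g1 * g2 * (1 / L2 - 1 / L1)"
proof -
  have g1e: "g1 = - b * L1" unfolding g1 r1 r2 L1 using orth by algebra
  have g2e: "g2 = a * L2" unfolding g2 r1 r2 L2 using orth by algebra
  have S: "\<beta> * (L2 - L1) = y1 * p1 + x1 * q1 + y2 * p2 + x2 * q2" unfolding L1 L2 using D9 by algebra
  have kp: "g3 * (L2 - L1)\<^sup>2 - I * (L2 - L1) * (y1 * p1 + x1 * q1 + y2 * p2 + x2 * q2)
      + (x1 * y2 - y1 * x2) * ((L2 - L1)\<^sup>2 * th') = 0"
    unfolding th[symmetric] unfolding g3 I L1 L2 using key_poly[OF orth, of q1 p1 q2 p2] by algebra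
  hence "(g3 - I * \<beta> + (x1 * y2 - y1 * x2) * th') * (L2 - L1)\<^sup>2 = 0"
    unfolding S[symmetric] by (simp add: algebra_simps power2_eq_square)
  hence k: "g3 - I * \<beta> + (x1 * y2 - y1 * x2) * th' = 0" using hnz by simp
  have Ip: "I > 0" using pos I by simp
  have be: "\<beta> = (g3 + (x1 * y2 - y1 * x2) * th') / I" using k Ip by (simp add: field_simps)
  have cpe: "cphi = 2 * (x1 * y2 - y1 * x2) / I" using cp Ip by (simp add: field_simps)
  have ae: "a = g2 / L2" and bfe: "b = - g1 / L1" using g1e g2e pos by (simp_all add: field_simps)
  show "dg1 = g2 * ((1 / I - 1 / L2) * g3 + 1 / 2 * th' * cphi)"
    unfolding dg1 be cpe ae using Ip pos by (simp add: field_simps)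
  show "dg2 = g1 * ((1 / L1 - 1 / I) * g3 - 1 / 2 * th' * cphi)"
    unfolding dg2 be cpe bfe using Ip pos by (simp add: field_simps)
  show "dg3 = g1 * g2 * (1 / L2 - 1 / L1)"
    unfolding dg3 ae bfe using Ip pos by (simp add: field_simps)
qed





lemma pointwise:
  fixes m1 m2 m3 :: real and a1 a2 a3 v1 v2 v3 u1 u2 n :: "real^3" and \<phi> \<theta> :: real
  assumes m: "m1 > 0" "m2 > 0" "m3 > 0" "m1 + m2 + m3 = 1"
    and tri: "oriented_mtriangle m1 m2 m3 a1 a2 a3 n"
    and fr: "eigenframe m1 m2 m3 a1 a2 a3 u1 u2 n"
    and co: "shape_coords m1 m2 m3 a1 a2 a3 n \<phi> \<theta>"
    and sp: "sin \<phi> \<noteq> 0"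
  defines "X \<equiv> jac_xi m1 m2 a1 a2" and "E \<equiv> jac_eta m1 m2 m3 a1 a2 a3"
    and "I \<equiv> moment_of_inertia m1 m2 m3 a1 a2 a3"
    and "B \<equiv> inertia_tensor m1 m2 m3 a1 a2 a3"
  shows "norm u1 = 1" "norm u2 = 1" "norm n = 1" "u1 \<bullet> u2 = 0" "u1 \<times> u2 = n"
    "u1 \<bullet> u1 = 1" "u2 \<bullet> u2 = 1" "n \<bullet> n = 1" "u2 \<times> n = u1" "n \<times> u1 = u2"
    "u2 \<times> u1 = - n" "n \<times> u2 = - u1" "u1 \<times> n = - u2" "u1 \<bullet> n = 0" "u2 \<bullet> n = 0"
    "\<And>c. c = (c \<bullet> u1) *\<^sub>R u1 + (c \<bullet> u2) *\<^sub>R u2 + (c \<bullet> n) *\<^sub>R n"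
    "X \<bullet> n = 0" "E \<bullet> n = 0"
    "X = (X \<bullet> u1) *\<^sub>R u1 + (X \<bullet> u2) *\<^sub>R u2"
    "E = (E \<bullet> u1) *\<^sub>R u1 + (E \<bullet> u2) *\<^sub>R u2"
    "ang_mom m1 m2 m3 a1 a2 a3 v1 v2 v3 = X \<times> jac_xi m1 m2 v1 v2 + E \<times> jac_eta m1 m2 m3 v1 v2 v3"
    "I = X \<bullet> X + E \<bullet> E"
    "(X \<bullet> u1) * (X \<bullet> u2) + (E \<bullet> u1) * (E \<bullet> u2) = 0"
    "B u1 u1 = (X \<bullet> u2)\<^sup>2 + (E \<bullet> u2)\<^sup>2"
    "B u2 u2 = (X \<bullet> u1)\<^sup>2 + (E \<bullet> u1)\<^sup>2"
    "B n n = I"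
    "I = ((X \<bullet> u2)\<^sup>2 + (E \<bullet> u2)\<^sup>2) + ((X \<bullet> u1)\<^sup>2 + (E \<bullet> u1)\<^sup>2)"
    "(X \<bullet> u2)\<^sup>2 + (E \<bullet> u2)\<^sup>2 > 0" "(X \<bullet> u1)\<^sup>2 + (E \<bullet> u1)\<^sup>2 > 0"
    "X \<times> E = (n \<bullet> (X \<times> E)) *\<^sub>R n"
    "n \<bullet> (X \<times> E) = (X \<bullet> u1) * (E \<bullet> u2) - (X \<bullet> u2) * (E \<bullet> u1)"
    "2 * (n \<bullet> (X \<times> E)) = I * cos \<phi>"
    "X \<bullet> X - E \<bullet> E = I * sin \<phi> * cos \<theta>"
    "2 * (X \<bullet> E) = I * sin \<phi> * sin \<theta>"
    "sqrt ((X \<bullet> X - E \<bullet> E)\<^sup>2 + (2 * (X \<bullet> E))\<^sup>2) = I * sin \<phi>"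
    "(X \<bullet> X - E \<bullet> E)\<^sup>2 + (2 * (X \<bullet> E))\<^sup>2 = (((X \<bullet> u1)\<^sup>2 + (E \<bullet> u1)\<^sup>2) - ((X \<bullet> u2)\<^sup>2 + (E \<bullet> u2)\<^sup>2))\<^sup>2"
    "I > 0" "sin \<phi> > 0"
proof -
  have F: "norm u1 = 1" "norm u2 = 1" "norm n = 1" "u1 \<bullet> u2 = 0" "u1 \<times> u2 = n"
    using fr by (auto simp: eigenframe_def)
  thus "norm u1 = 1" "norm u2 = 1" "norm n = 1" "u1 \<bullet> u2 = 0" "u1 \<times> u2 = n" by auto
  note ff = frame_facts[OF F(1,2,4,5)]
  show "u1 \<bullet> u1 = 1" "u2 \<bullet> u2 = 1" "n \<bullet> n = 1" "u2 \<times> n = u1" "n \<times> u1 = u2"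
    "u2 \<times> u1 = - n" "n \<times> u2 = - u1" "u1 \<times> n = - u2" "u1 \<bullet> n = 0" "u2 \<bullet> n = 0"
    "\<And>c. c = (c \<bullet> u1) *\<^sub>R u1 + (c \<bullet> u2) *\<^sub>R u2 + (c \<bullet> n) *\<^sub>R n" using ff by auto
  have com: "m1 *\<^sub>R a1 + m2 *\<^sub>R a2 + m3 *\<^sub>R a3 = 0" and na: "n \<bullet> a1 = 0" "n \<bullet> a2 = 0" "n \<bullet> a3 = 0"
    using tri by (auto simp: oriented_mtriangle_def)
  note st = static[OF m com, folded X_def E_def I_def B_def]
  note rp = jac_repr[OF m com, folded X_def E_def]
  have na': "a1 \<bullet> n = 0" "a2 \<bullet> n = 0" "a3 \<bullet> n = 0" using na by (simp_all add: inner_commute)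
  show Xn: "X \<bullet> n = 0" using na' unfolding X_def jac_xi_def
    by (simp add: inner_diff_left)
  show En: "E \<bullet> n = 0" using na' unfolding E_def jac_eta_def
    by (simp add: inner_diff_left inner_add_left)
  show Xd: "X = (X \<bullet> u1) *\<^sub>R u1 + (X \<bullet> u2) *\<^sub>R u2" using ff(11)[of X] Xn by simp
  show Ed: "E = (E \<bullet> u1) *\<^sub>R u1 + (E \<bullet> u2) *\<^sub>R u2" using ff(11)[of E] En by simp
  show "ang_mom m1 m2 m3 a1 a2 a3 v1 v2 v3 = X \<times> jac_xi m1 m2 v1 v2 + E \<times> jac_eta m1 m2 m3 v1 v2 v3"
    using st(4) .
  show I: "I = X \<bullet> X + E \<bullet> E" using st(1) .
  obtain l where l: "is_eigvec B u1 l" using fr by (auto simp: eigenframe_def B_def)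
  have "B u1 u2 = 0" using l F(4) by (simp add: is_eigvec_def)
  thus orth: "(X \<bullet> u1) * (X \<bullet> u2) + (E \<bullet> u1) * (E \<bullet> u2) = 0"
    using st(3)[of u1 u2] F(4) by (simp add: inner_commute)
  have XX: "X \<bullet> X = (X \<bullet> u1)\<^sup>2 + (X \<bullet> u2)\<^sup>2"
    by (subst (1 2) Xd) (simp add: inner_add_left inner_add_right ff F(4) inner_commute power2_eq_square)
  have EE: "E \<bullet> E = (E \<bullet> u1)\<^sup>2 + (E \<bullet> u2)\<^sup>2"
    by (subst (1 2) Ed) (simp add: inner_add_left inner_add_right ff F(4) inner_commute power2_eq_square)
  show I2: "I = ((X \<bullet> u2)\<^sup>2 + (E \<bullet> u2)\<^sup>2) + ((X \<bullet> u1)\<^sup>2 + (E \<bullet> u1)\<^sup>2)"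
    using I XX EE by simp
  show "B u1 u1 = (X \<bullet> u2)\<^sup>2 + (E \<bullet> u2)\<^sup>2"
    using st(3)[of u1 u1] ff(1) I I2 by (simp add: inner_commute power2_eq_square)
  show "B u2 u2 = (X \<bullet> u1)\<^sup>2 + (E \<bullet> u1)\<^sup>2"
    using st(3)[of u2 u2] ff(2) I I2 by (simp add: inner_commute power2_eq_square)
  show "B n n = I"
    using st(3)[of n n] ff(3) I Xn En by (simp add: inner_commute)
  have pos: "(X \<bullet> u) \<^sup>2 + (E \<bullet> u)\<^sup>2 > 0" if "u \<in> span {a1, a2, a3}" "norm u = 1" for u
  proof (rule ccontr)
    assume "\<not> ?thesis"
    hence "X \<bullet> u = 0" "E \<bullet> u = 0"
      by (smt (verit) power2_less_eq_zero_iff sum_power2_eq_zero_iff)+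
    hence uX: "u \<bullet> X = 0" "u \<bullet> E = 0" by (simp_all add: inner_commute)
    have "u \<bullet> a1 = 0" by (subst rp(1)) (simp add: inner_add_right inner_diff_right inner_minus_right uX)
    moreover have "u \<bullet> a2 = 0" by (subst rp(2)) (simp add: inner_add_right inner_diff_right inner_minus_right uX)
    moreover have "u \<bullet> a3 = 0" by (subst rp(3)) (simp add: inner_add_right inner_diff_right inner_minus_right uX)
    ultimately
    have "u = 0" using span3_orth that(1) by blast
    thus False using that(2) by simp
  qed
  show "(X \<bullet> u2)\<^sup>2 + (E \<bullet> u2)\<^sup>2 > 0" using pos fr F by (auto simp: eigenframe_def)
  show "(X \<bullet> u1)\<^sup>2 + (E \<bullet> u1)\<^sup>2 > 0" using pos fr F by (auto simp: eigenframe_def)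
  have cr: "X \<times> E = ((X \<bullet> u1) * (E \<bullet> u2) - (X \<bullet> u2) * (E \<bullet> u1)) *\<^sub>R n"
    by (subst Xd, subst Ed) (simp add: cross_add_left cross_add_right cross_mult_left cross_mult_right ff F(5) algebra_simps)
  show dl: "n \<bullet> (X \<times> E) = (X \<bullet> u1) * (E \<bullet> u2) - (X \<bullet> u2) * (E \<bullet> u1)"
    unfolding cr using ff(3) by simp
  show "X \<times> E = (n \<bullet> (X \<times> E)) *\<^sub>R n" unfolding dl by (rule cr)
  have cc: "0 \<le> \<phi>" "\<phi> \<le> pi" "2 * (n \<bullet> (X \<times> E)) = I * cos \<phi>"
    "X \<bullet> X - E \<bullet> E = I * sin \<phi> * cos \<theta>" "2 * (X \<bullet> E) = I * sin \<phi> * sin \<theta>"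
    using co by (simp_all add: shape_coords_def Let_def X_def E_def I_def)
  thus "2 * (n \<bullet> (X \<times> E)) = I * cos \<phi>" "X \<bullet> X - E \<bullet> E = I * sin \<phi> * cos \<theta>"
    "2 * (X \<bullet> E) = I * sin \<phi> * sin \<theta>" by auto
  show Ip: "I > 0" using I2 \<open>(X \<bullet> u2)\<^sup>2 + (E \<bullet> u2)\<^sup>2 > 0\<close> \<open>(X \<bullet> u1)\<^sup>2 + (E \<bullet> u1)\<^sup>2 > 0\<close> by simp
  have "sin \<phi> \<ge> 0" using cc(1,2) sin_ge_zero by blast
  thus sp': "sin \<phi> > 0" using sp by simp
  have "(X \<bullet> X - E \<bullet> E)\<^sup>2 + (2 * (X \<bullet> E))\<^sup>2 = (I * sin \<phi>)\<^sup>2"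
    unfolding cc(4,5) using sin_cos_squared_add2[of \<theta>] by algebra
  thus "sqrt ((X \<bullet> X - E \<bullet> E)\<^sup>2 + (2 * (X \<bullet> E))\<^sup>2) = I * sin \<phi>" using Ip sp' by simp
  have zz1: "X \<bullet> X - E \<bullet> E = (X \<bullet> u1)\<^sup>2 + (X \<bullet> u2)\<^sup>2 - ((E \<bullet> u1)\<^sup>2 + (E \<bullet> u2)\<^sup>2)" using XX EE by simp
  have zz2: "X \<bullet> E = (X \<bullet> u1) * (E \<bullet> u1) + (X \<bullet> u2) * (E \<bullet> u2)"
    by (subst (1) Xd, subst (1) Ed) (simp add: inner_add_left inner_add_right ff F(4) inner_commute)
  show "(X \<bullet> X - E \<bullet> E)\<^sup>2 + (2 * (X \<bullet> E))\<^sup>2 = (((X \<bullet> u1)\<^sup>2 + (E \<bullet> u1)\<^sup>2) - ((X \<bullet> u2)\<^sup>2 + (E \<bullet> u2)\<^sup>2))\<^sup>2"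
    unfolding zz1 zz2 by (rule disc_poly[OF orth])
qed





theorem theoremD:
  fixes m1 m2 m3 :: real
    and a1 a2 a3 v1 v2 v3 u1 u2 n :: "real \<Rightarrow> real^3"
    and \<Omega> :: "real^3"
    and \<phi> \<theta> \<theta>' :: "real \<Rightarrow> real"
    and J :: "real set" and t :: real
  assumes masses: "m1 > 0" "m2 > 0" "m3 > 0" "m1 + m2 + m3 = 1"
    and J: "open J" "t \<in> J"
    and motion: "\<And>s. s \<in> J \<Longrightarrow> (a1 has_vector_derivative v1 s) (at s)"
                "\<And>s. s \<in> J \<Longrightarrow> (a2 has_vector_derivative v2 s) (at s)"
                "\<And>s. s \<in> J \<Longrightarrow> (a3 has_vector_derivative v3 s) (at s)"
    and tri: "\<And>s. s \<in> J \<Longrightarrow> oriented_mtriangle m1 m2 m3 (a1 s) (a2 s) (a3 s) (n s)"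
    and nondeg: "\<And>s. s \<in> J \<Longrightarrow> nondegenerate (a1 s) (a2 s) (a3 s)"
    and const_Omega: "\<And>s. s \<in> J \<Longrightarrow>
           ang_mom m1 m2 m3 (a1 s) (a2 s) (a3 s) (v1 s) (v2 s) (v3 s) = \<Omega>"
    and frame: "\<And>s. s \<in> J \<Longrightarrow> eigenframe m1 m2 m3 (a1 s) (a2 s) (a3 s) (u1 s) (u2 s) (n s)"
    and frame_cont: "continuous_on J u1" "continuous_on J u2" "continuous_on J n"
    and coords: "\<And>s. s \<in> J \<Longrightarrow> shape_coords m1 m2 m3 (a1 s) (a2 s) (a3 s) (n s) (\<phi> s) (\<theta> s)"
    and not_pole: "\<And>s. s \<in> J \<Longrightarrow> sin (\<phi> s) \<noteq> 0"
    and theta_deriv: "\<And>s. s \<in> J \<Longrightarrow> (\<theta> has_real_derivative \<theta>' s) (at s)"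
  defines "g1 \<equiv> \<lambda>s. \<Omega> \<bullet> u1 s"
    and "g2 \<equiv> \<lambda>s. \<Omega> \<bullet> u2 s"
    and "g3 \<equiv> \<lambda>s. \<Omega> \<bullet> n s"
    and "lam1 \<equiv> \<lambda>s. inertia_tensor m1 m2 m3 (a1 s) (a2 s) (a3 s) (u1 s) (u1 s)"
    and "lam2 \<equiv> \<lambda>s. inertia_tensor m1 m2 m3 (a1 s) (a2 s) (a3 s) (u2 s) (u2 s)"
    and "lam3 \<equiv> \<lambda>s. inertia_tensor m1 m2 m3 (a1 s) (a2 s) (a3 s) (n s) (n s)"
    and "\<rho> \<equiv> \<lambda>s. sqrt (moment_of_inertia m1 m2 m3 (a1 s) (a2 s) (a3 s))"
  shows "(g1 has_real_derivative
            g2 t * ((1 / lam3 t - 1 / lam2 t) * g3 t + 1/2 * \<theta>' t * cos (\<phi> t))) (at t) \<and>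
         (g2 has_real_derivative
            g1 t * ((1 / lam1 t - 1 / lam3 t) * g3 t - 1/2 * \<theta>' t * cos (\<phi> t))) (at t) \<and>
         (g3 has_real_derivative g1 t * g2 t * (1 / lam2 t - 1 / lam1 t)) (at t) \<and>
         {lam1 t, lam2 t} = {(\<rho> t)\<^sup>2 / 2 * (1 + sin (\<phi> t)), (\<rho> t)\<^sup>2 / 2 * (1 - sin (\<phi> t))} \<and>
         lam3 t = (\<rho> t)\<^sup>2"
proof -
  define X where "X = (\<lambda>s. jac_xi m1 m2 (a1 s) (a2 s))"
  define E where "E = (\<lambda>s. jac_eta m1 m2 m3 (a1 s) (a2 s) (a3 s))"
  define X' where "X' = (\<lambda>s. jac_xi m1 m2 (v1 s) (v2 s))"
  define E' where "E' = (\<lambda>s. jac_eta m1 m2 m3 (v1 s) (v2 s) (v3 s))"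
  define I where "I = (\<lambda>s. moment_of_inertia m1 m2 m3 (a1 s) (a2 s) (a3 s))"
  have Xs: "\<And>s. jac_xi m1 m2 (a1 s) (a2 s) = X s" by (simp add: X_def)
  have Es: "\<And>s. jac_eta m1 m2 m3 (a1 s) (a2 s) (a3 s) = E s" by (simp add: E_def)
  have X's: "\<And>s. jac_xi m1 m2 (v1 s) (v2 s) = X' s" by (simp add: X'_def)
  have E's: "\<And>s. jac_eta m1 m2 m3 (v1 s) (v2 s) (v3 s) = E' s" by (simp add: E'_def)
  have Is: "\<And>s. moment_of_inertia m1 m2 m3 (a1 s) (a2 s) (a3 s) = I s" by (simp add: I_def)
  have l1s: "\<And>s. inertia_tensor m1 m2 m3 (a1 s) (a2 s) (a3 s) (u1 s) (u1 s) = lam1 s" by (simp add: lam1_def)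
  have l2s: "\<And>s. inertia_tensor m1 m2 m3 (a1 s) (a2 s) (a3 s) (u2 s) (u2 s) = lam2 s" by (simp add: lam2_def)
  have l3s: "\<And>s. inertia_tensor m1 m2 m3 (a1 s) (a2 s) (a3 s) (n s) (n s) = lam3 s" by (simp add: lam3_def)
  note PW = pointwise[OF masses tri frame coords not_pole, unfolded Xs Es Is X's E's l1s l2s l3s]
  have Om: "\<Omega> = X s \<times> X' s + E s \<times> E' s" if hs: "s \<in> J" for s
    using const_Omega[OF hs] PW(21)[OF hs hs hs hs, of "v1 s" "v2 s" "v3 s"] by (simp add: X's E's)
  have vd_scale: "\<And>f f' c F. (f has_vector_derivative f') F \<Longrightarrow> ((\<lambda>x. c *\<^sub>R f x) has_vector_derivative c *\<^sub>R f') F"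
    by (rule bounded_linear.has_vector_derivative[OF bounded_linear_scaleR_right])
  have dX: "(X has_vector_derivative X' s) (at s)" if hs: "s \<in> J" for s
    unfolding X_def X'_def jac_xi_def
    by (intro vd_scale has_vector_derivative_diff motion[OF hs])
  have dE: "(E has_vector_derivative E' s) (at s)" if hs: "s \<in> J" for s
    unfolding E_def E'_def jac_eta_def
    by (intro vd_scale has_vector_derivative_diff has_vector_derivative_add motion[OF hs])
  have cX: "isCont X t" using has_vector_derivative_continuous[OF dX[OF J(2)]] by simp
  have cE: "isCont E t" using has_vector_derivative_continuous[OF dE[OF J(2)]] by simp
  have cu1: "isCont u1 t" and cu2: "isCont u2 t" and cn: "isCont n t"
    using frame_cont J continuous_on_eq_continuous_at by blast+
  have evJ: "eventually (\<lambda>s. s \<in> J) (nhds t)" using eventually_nhds_in_open[OF J] .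
  note pt = PW[OF J(2) J(2) J(2) J(2)]
  have det_sq: "(x1 * y2 - y1 * x2)\<^sup>2 = (x1\<^sup>2 + x2\<^sup>2) * (y1\<^sup>2 + y2\<^sup>2)"
    if "x1 * y1 + x2 * y2 = 0" for x1 x2 y1 y2 :: real
    using that by algebra
  define wn where "wn = (\<lambda>s. X s \<times> E s)"
  have dwn: "(wn has_vector_derivative (X t \<times> E' t + X' t \<times> E t)) (at t)"
    unfolding wn_def by (rule vd_cross[OF dX[OF J(2)] dE[OF J(2)]])
  have dl_nz: "n s \<bullet> (X s \<times> E s) \<noteq> 0" if hs: "s \<in> J" for s
  proof -
    note p = PW[OF hs hs hs hs]
    have "(n s \<bullet> (X s \<times> E s))\<^sup>2 > 0"
      unfolding p(31) det_sq[OF p(23)] using p(28) p(29) by simp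
    thus ?thesis by auto
  qed
  have wn_t: "wn t \<noteq> 0"
  proof
    assume "wn t = 0"
    hence "n t \<bullet> (X t \<times> E t) = 0" by (simp add: wn_def)
    thus False using dl_nz[OF J(2)] by simp
  qed
  obtain dnz where dnz: "((\<lambda>s. inverse (sqrt (wn s \<bullet> wn s)) *\<^sub>R wn s) has_vector_derivative dnz) (at t)"
    using vd_normalize[OF dwn wn_t] by blast
  have "eventually (\<lambda>s. n s = inverse (sqrt (wn s \<bullet> wn s)) *\<^sub>R wn s \<or> n s = - (inverse (sqrt (wn s \<bullet> wn s)) *\<^sub>R wn s)) (nhds t)"
    using evJ
  proof eventually_elim
    case (elim s)
    note p = PW[OF elim elim elim elim]
    have "wn s = (n s \<bullet> (X s \<times> E s)) *\<^sub>R n s" unfolding wn_def by (rule p(30))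
    thus ?case using unit_sign[OF p(3) dl_nz[OF elim]] by simp
  qed
  moreover have "inverse (sqrt (wn t \<bullet> wn t)) *\<^sub>R wn t \<noteq> 0" using wn_t by simp
  ultimately obtain n' where dn: "(n has_vector_derivative n') (at t)"
    using sign_deriv[OF cn dnz] by blast
  define L1 where "L1 = (\<lambda>s. (X s \<bullet> u2 s)\<^sup>2 + (E s \<bullet> u2 s)\<^sup>2)"
  define L2 where "L2 = (\<lambda>s. (X s \<bullet> u1 s)\<^sup>2 + (E s \<bullet> u1 s)\<^sup>2)"
  define h where "h = (\<lambda>s. L2 s - L1 s)"
  define Dd where "Dd = (\<lambda>s. (X s \<bullet> X s - E s \<bullet> E s)\<^sup>2 + (2 * (X s \<bullet> E s))\<^sup>2)"
  have hsq: "Dd s = (h s)\<^sup>2" if hs: "s \<in> J" for s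
    using PW(36)[OF hs hs hs hs] by (simp add: Dd_def h_def L1_def L2_def)
  have Dd_pos: "Dd t > 0"
  proof -
    have "sqrt (Dd t) = I t * sin (\<phi> t)" using pt(35) by (simp add: Dd_def)
    moreover have "I t * sin (\<phi> t) > 0" using pt(37) pt(38) by simp
    ultimately show ?thesis by (metis real_sqrt_gt_0_iff)
  qed
  have h_nz: "h t \<noteq> 0" using Dd_pos hsq[OF J(2)] by auto
  obtain dDd where dDd: "(Dd has_real_derivative dDd) (at t)"
  proof -
    note i1 = vd_inner[OF dX[OF J(2)] dX[OF J(2)]] and i2 = vd_inner[OF dE[OF J(2)] dE[OF J(2)]]
      and i3 = vd_inner[OF dX[OF J(2)] dE[OF J(2)]]
    note d1 = DERIV_diff[OF i1 i2]
    note d2 = DERIV_cmult[OF i3, of 2]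
    note dd = DERIV_add[OF DERIV_mult[OF d1 d1] DERIV_mult[OF d2 d2]]
    show ?thesis using that dd unfolding Dd_def power2_eq_square by blast
  qed
  have dsq: "((\<lambda>s. sqrt (Dd s)) has_real_derivative (inverse (sqrt (Dd t)) / 2 * dDd)) (at t)"
    by (rule DERIV_chain2[OF DERIV_real_sqrt[OF Dd_pos] dDd])
  have ch: "isCont h t" unfolding h_def L1_def L2_def
    using cX cE cu1 cu2 by (intro continuous_intros)
  have "eventually (\<lambda>s. h s = sqrt (Dd s) \<or> h s = - sqrt (Dd s)) (nhds t)"
    using evJ
  proof eventually_elim
    case (elim s)
    show ?case unfolding hsq[OF elim] by (cases "h s \<ge> 0") auto
  qed
  moreover have "sqrt (Dd t) \<noteq> 0" using Dd_pos by simp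
  ultimately obtain h' where dh: "(h has_vector_derivative h') (at t)"
    using sign_deriv[OF ch dsq[unfolded has_real_derivative_iff_has_vector_derivative]] by blast
  have L1e: "L1 s = (X s \<bullet> X s + E s \<bullet> E s - h s) / 2" if hs: "s \<in> J" for s
    using PW(22,27)[OF hs hs hs hs] by (simp add: h_def L1_def L2_def)
  obtain dL1 where dL1: "(L1 has_real_derivative dL1) (at t)"
  proof -
    note i1 = vd_inner[OF dX[OF J(2)] dX[OF J(2)]] and i2 = vd_inner[OF dE[OF J(2)] dE[OF J(2)]]
    note dd = DERIV_cdivide[OF DERIV_diff[OF DERIV_add[OF i1 i2] dh[unfolded has_real_derivative_iff_has_vector_derivative[symmetric]]], of 2]
    from has_field_derivative_transform_within_open[OF dd J] L1e that show ?thesis by metis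
  qed
  define c where "c = u1 t"
  define v where "v = (\<lambda>s. (X s \<bullet> c) *\<^sub>R X s + (E s \<bullet> c) *\<^sub>R E s - L1 s *\<^sub>R (c - (n s \<bullet> c) *\<^sub>R n s))"
  have v_eq: "v s = ((u1 s \<bullet> c) * h s) *\<^sub>R u1 s" if hs: "s \<in> J" for s
  proof -
    note p = PW[OF hs hs hs hs]
    define x1 where "x1 = X s \<bullet> u1 s"
    define y1 where "y1 = X s \<bullet> u2 s"
    define x2 where "x2 = E s \<bullet> u1 s"
    define y2 where "y2 = E s \<bullet> u2 s"
    define C1 where "C1 = u1 s \<bullet> c"
    define C2 where "C2 = u2 s \<bullet> c"
    have cd: "c = C1 *\<^sub>R u1 s + C2 *\<^sub>R u2 s + (n s \<bullet> c) *\<^sub>R n s"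
      using p(16)[of c] by (simp add: C1_def C2_def inner_commute)
    have Xd: "X s = x1 *\<^sub>R u1 s + y1 *\<^sub>R u2 s" using p(19) by (simp add: x1_def y1_def)
    have Ed: "E s = x2 *\<^sub>R u1 s + y2 *\<^sub>R u2 s" using p(20) by (simp add: x2_def y2_def)
    have Xc: "X s \<bullet> c = x1 * C1 + y1 * C2" by (subst Xd) (simp add: inner_add_left C1_def C2_def)
    have Ec: "E s \<bullet> c = x2 * C1 + y2 * C2" by (subst Ed) (simp add: inner_add_left C1_def C2_def)
    have Pc: "c - (n s \<bullet> c) *\<^sub>R n s = C1 *\<^sub>R u1 s + C2 *\<^sub>R u2 s" using cd by (simp add: algebra_simps)
    have orth: "x1 * y1 + x2 * y2 = 0" using p(23) by (simp add: x1_def y1_def x2_def y2_def)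
    have L1s: "L1 s = y1\<^sup>2 + y2\<^sup>2" by (simp add: L1_def y1_def y2_def)
    have hs': "h s = (x1\<^sup>2 + x2\<^sup>2) - (y1\<^sup>2 + y2\<^sup>2)" by (simp add: h_def L1_def L2_def x1_def x2_def y1_def y2_def)
    have "v s = (x1 * C1 + y1 * C2) *\<^sub>R (x1 *\<^sub>R u1 s + y1 *\<^sub>R u2 s) + (x2 * C1 + y2 * C2) *\<^sub>R (x2 *\<^sub>R u1 s + y2 *\<^sub>R u2 s)
        - (y1\<^sup>2 + y2\<^sup>2) *\<^sub>R (C1 *\<^sub>R u1 s + C2 *\<^sub>R u2 s)"
      unfolding v_def using Xc Ec Pc L1s Xd Ed by simp
    also have "\<dots> = (C1 * ((x1\<^sup>2 + x2\<^sup>2) - (y1\<^sup>2 + y2\<^sup>2)) + C2 * (x1 * y1 + x2 * y2)) *\<^sub>R u1 s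
        + (C1 * (x1 * y1 + x2 * y2)) *\<^sub>R u2 s"
      by (simp add: vec_eq_iff algebra_simps power2_eq_square)
    also have "\<dots> = (C1 * h s) *\<^sub>R u1 s" unfolding orth hs' by simp
    finally show ?thesis by (simp add: C1_def)
  qed
  have dv: "(v has_vector_derivative
      ((X t \<bullet> c) *\<^sub>R X' t + (X t \<bullet> 0 + X' t \<bullet> c) *\<^sub>R X t
      + ((E t \<bullet> c) *\<^sub>R E' t + (E t \<bullet> 0 + E' t \<bullet> c) *\<^sub>R E t)
      - (L1 t *\<^sub>R (0 - ((n t \<bullet> c) *\<^sub>R n' + (n t \<bullet> 0 + n' \<bullet> c) *\<^sub>R n t)) + dL1 *\<^sub>R (c - (n t \<bullet> c) *\<^sub>R n t)))) (at t)"
    unfolding v_def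
    by (intro has_vector_derivative_add has_vector_derivative_diff has_vector_derivative_scaleR
        vd_inner dX[OF J(2)] dE[OF J(2)] dn dL1 has_vector_derivative_const)
  have vt: "v t \<noteq> 0"
  proof -
    have "v t = h t *\<^sub>R u1 t" using v_eq[OF J(2)] pt(6) by (simp add: c_def)
    thus ?thesis using h_nz pt(1) by auto
  qed
  have cv: "isCont v t" using has_vector_derivative_continuous[OF dv] by simp
  obtain dnv where dnv: "((\<lambda>s. inverse (sqrt (v s \<bullet> v s)) *\<^sub>R v s) has_vector_derivative dnv) (at t)"
    using vd_normalize[OF dv vt] by blast
  have "eventually (\<lambda>s. u1 s = inverse (sqrt (v s \<bullet> v s)) *\<^sub>R v s \<or> u1 s = - (inverse (sqrt (v s \<bullet> v s)) *\<^sub>R v s)) (nhds t)"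
    using evJ ev_nonzero[OF cv vt]
  proof eventually_elim
    case (elim s)
    have "(u1 s \<bullet> c) * h s \<noteq> 0" using elim(2) v_eq[OF elim(1)] by auto
    thus ?case using unit_sign[OF PW(1)[OF elim(1) elim(1) elim(1) elim(1)]] v_eq[OF elim(1)] by simp
  qed
  moreover have "inverse (sqrt (v t \<bullet> v t)) *\<^sub>R v t \<noteq> 0" using vt by simp
  ultimately obtain u1' where du1: "(u1 has_vector_derivative u1') (at t)"
    using sign_deriv[OF cu1 dnv] by blast
  have du2: "(u2 has_vector_derivative (n t \<times> u1' + n' \<times> u1 t)) (at t)"
  proof -
    have "((\<lambda>s. n s \<times> u1 s) has_vector_derivative (n t \<times> u1' + n' \<times> u1 t)) (at t)"
      by (rule vd_cross[OF dn du1])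
    moreover have "\<And>s. s \<in> J \<Longrightarrow> n s \<times> u1 s = u2 s" using PW(10) by blast
    ultimately show ?thesis using has_vector_derivative_transform_within_open[OF _ J] by blast
  qed
  define u2' where "u2' = n t \<times> u1' + n' \<times> u1 t"
  note du2 = du2[folded u2'_def]
  have Z: "\<And>F c F'. (\<And>s. s \<in> J \<Longrightarrow> F s = c) \<Longrightarrow> (F has_real_derivative F') (at t) \<Longrightarrow> F' = 0"
    using deriv_zero_on[OF J] by blast
  have D1: "u1 t \<bullet> u1' + u1' \<bullet> u1 t = 0" using Z[OF _ vd_inner[OF du1 du1], of 1] PW(6) by blast
  have D2: "u2 t \<bullet> u2' + u2' \<bullet> u2 t = 0" using Z[OF _ vd_inner[OF du2 du2], of 1] PW(7) by blast
  have D3: "n t \<bullet> n' + n' \<bullet> n t = 0" using Z[OF _ vd_inner[OF dn dn], of 1] PW(8) by blast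
  have D4: "u1 t \<bullet> u2' + u1' \<bullet> u2 t = 0" using Z[OF _ vd_inner[OF du1 du2], of 0] PW(4) by blast
  have D5: "u1 t \<bullet> n' + u1' \<bullet> n t = 0" using Z[OF _ vd_inner[OF du1 dn], of 0] PW(14) by blast
  have D6: "u2 t \<bullet> n' + u2' \<bullet> n t = 0" using Z[OF _ vd_inner[OF du2 dn], of 0] PW(15) by blast
  have D7: "X t \<bullet> n' + X' t \<bullet> n t = 0" using Z[OF _ vd_inner[OF dX[OF J(2)] dn], of 0] PW(17) by blast
  have D8: "E t \<bullet> n' + E' t \<bullet> n t = 0" using Z[OF _ vd_inner[OF dE[OF J(2)] dn], of 0] PW(18) by blast
  have D9: "(X t \<bullet> u1' + X' t \<bullet> u1 t) * (X t \<bullet> u2 t) + (X t \<bullet> u2' + X' t \<bullet> u2 t) * (X t \<bullet> u1 t)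
     + ((E t \<bullet> u1' + E' t \<bullet> u1 t) * (E t \<bullet> u2 t) + (E t \<bullet> u2' + E' t \<bullet> u2 t) * (E t \<bullet> u1 t)) = 0"
    using Z[OF _ DERIV_add[OF DERIV_mult[OF vd_inner[OF dX[OF J(2)] du1] vd_inner[OF dX[OF J(2)] du2]]
                              DERIV_mult[OF vd_inner[OF dE[OF J(2)] du1] vd_inner[OF dE[OF J(2)] du2]]], of 0]
      PW(23) by blast
  define R where "R = sqrt (Dd t)"
  define R' where "R' = inverse (sqrt (Dd t)) / 2 * dDd"
  have F1: "(X t \<bullet> X' t + X' t \<bullet> X t - (E t \<bullet> E' t + E' t \<bullet> E t)) - (R' * cos (\<theta> t) + (- sin (\<theta> t) * \<theta>' t) * R) = 0"
  proof -
    have "\<And>s. s \<in> J \<Longrightarrow> (X s \<bullet> X s - E s \<bullet> E s) - sqrt (Dd s) * cos (\<theta> s) = 0"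
    proof -
      fix s assume hs: "s \<in> J"
      note p = PW[OF hs hs hs hs]
      show "(X s \<bullet> X s - E s \<bullet> E s) - sqrt (Dd s) * cos (\<theta> s) = 0"
        using p(33) p(35) by (simp add: Dd_def)
    qed
    from Z[OF this DERIV_diff[OF DERIV_diff[OF vd_inner[OF dX[OF J(2)] dX[OF J(2)]] vd_inner[OF dE[OF J(2)] dE[OF J(2)]]]
           DERIV_mult[OF dsq DERIV_fun_cos[OF theta_deriv[OF J(2)]]]]]
    show ?thesis by (simp add: R_def R'_def)
  qed
  have F2: "2 * (X t \<bullet> E' t + X' t \<bullet> E t) - (R' * sin (\<theta> t) + (cos (\<theta> t) * \<theta>' t) * R) = 0"
  proof -
    have "\<And>s. s \<in> J \<Longrightarrow> 2 * (X s \<bullet> E s) - sqrt (Dd s) * sin (\<theta> s) = 0"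
    proof -
      fix s assume hs: "s \<in> J"
      note p = PW[OF hs hs hs hs]
      show "2 * (X s \<bullet> E s) - sqrt (Dd s) * sin (\<theta> s) = 0"
      proof -
        have "sqrt (Dd s) = I s * sin (\<phi> s)" unfolding Dd_def by (rule p(35))
        thus ?thesis using p(34) by simp
      qed
    qed
    from Z[OF this DERIV_diff[OF DERIV_cmult[OF vd_inner[OF dX[OF J(2)] dE[OF J(2)]], of 2]
           DERIV_mult[OF dsq DERIV_fun_sin[OF theta_deriv[OF J(2)]]]]]
    show ?thesis by (simp add: R_def R'_def)
  qed
  have Rt: "R = I t * sin (\<phi> t)" unfolding R_def Dd_def by (rule pt(35))
  have Z1t: "X t \<bullet> X t - E t \<bullet> E t = R * cos (\<theta> t)" using pt(33) Rt by simp
  have Z2t: "2 * (X t \<bullet> E t) = R * sin (\<theta> t)" using pt(34) Rt by simp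
  have R2: "R\<^sup>2 = (h t)\<^sup>2" using hsq[OF J(2)] Dd_pos by (simp add: R_def)
  have W: "(X t \<bullet> X t - E t \<bullet> E t) * (2 * (X t \<bullet> E' t + X' t \<bullet> E t))
      - (2 * (X t \<bullet> E t)) * (X t \<bullet> X' t + X' t \<bullet> X t - (E t \<bullet> E' t + E' t \<bullet> E t)) = (h t)\<^sup>2 * \<theta>' t"
    unfolding Z1t Z2t R2[symmetric] using F1 F2 sin_cos_squared_add[of "\<theta> t"] by algebra
  define x1 where "x1 = X t \<bullet> u1 t"
  define y1 where "y1 = X t \<bullet> u2 t"
  define x2 where "x2 = E t \<bullet> u1 t"
  define y2 where "y2 = E t \<bullet> u2 t"
  define p1 where "p1 = X' t \<bullet> u1 t"
  define q1 where "q1 = X' t \<bullet> u2 t"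
  define r1 where "r1 = X' t \<bullet> n t"
  define p2 where "p2 = E' t \<bullet> u1 t"
  define q2 where "q2 = E' t \<bullet> u2 t"
  define r2 where "r2 = E' t \<bullet> n t"
  define \<beta> where "\<beta> = u1' \<bullet> u2 t"
  define a where "a = u1 t \<bullet> n'"
  define b where "b = u2 t \<bullet> n'"
  have Xd: "X t = x1 *\<^sub>R u1 t + y1 *\<^sub>R u2 t" using pt(19) by (simp add: x1_def y1_def)
  have Ed: "E t = x2 *\<^sub>R u1 t + y2 *\<^sub>R u2 t" using pt(20) by (simp add: x2_def y2_def)
  have X'd: "X' t = p1 *\<^sub>R u1 t + q1 *\<^sub>R u2 t + r1 *\<^sub>R n t"
    using pt(16)[of "X' t"] by (simp add: p1_def q1_def r1_def)
  have E'd: "E' t = p2 *\<^sub>R u1 t + q2 *\<^sub>R u2 t + r2 *\<^sub>R n t"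
    using pt(16)[of "E' t"] by (simp add: p2_def q2_def r2_def)
  have ip: "u1 t \<bullet> u1 t = 1" "u2 t \<bullet> u2 t = 1" "n t \<bullet> n t = 1" "u1 t \<bullet> u2 t = 0" "u2 t \<bullet> u1 t = 0"
    "u1 t \<bullet> n t = 0" "n t \<bullet> u1 t = 0" "u2 t \<bullet> n t = 0" "n t \<bullet> u2 t = 0"
    using pt(6,7,8,4,14,15) by (simp_all add: inner_commute)
  have ctab: "u1 t \<times> u2 t = n t" "u2 t \<times> n t = u1 t" "n t \<times> u1 t = u2 t"
    "u2 t \<times> u1 t = - n t" "n t \<times> u2 t = - u1 t" "u1 t \<times> n t = - u2 t"
    using pt(5,9,10,11,12,13) by auto
  have XX: "X t \<bullet> X t = x1\<^sup>2 + y1\<^sup>2" unfolding Xd by (simp add: inner_add_left inner_add_right ip power2_eq_square)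
  have EE: "E t \<bullet> E t = x2\<^sup>2 + y2\<^sup>2" unfolding Ed by (simp add: inner_add_left inner_add_right ip power2_eq_square)
  have XE: "X t \<bullet> E t = x1 * x2 + y1 * y2" unfolding Xd Ed by (simp add: inner_add_left inner_add_right ip)
  have XX': "X t \<bullet> X' t = x1 * p1 + y1 * q1" "X' t \<bullet> X t = x1 * p1 + y1 * q1"
    unfolding Xd X'd by (simp_all add: inner_add_left inner_add_right ip)
  have EE': "E t \<bullet> E' t = x2 * p2 + y2 * q2" "E' t \<bullet> E t = x2 * p2 + y2 * q2"
    unfolding Ed E'd by (simp_all add: inner_add_left inner_add_right ip)
  have XE': "X t \<bullet> E' t = x1 * p2 + y1 * q2" "X' t \<bullet> E t = p1 * x2 + q1 * y2"
    unfolding Xd Ed X'd E'd by (simp_all add: inner_add_left inner_add_right ip)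
  have ht: "h t = (x1\<^sup>2 + x2\<^sup>2) - (y1\<^sup>2 + y2\<^sup>2)" by (simp add: h_def L1_def L2_def x1_def x2_def y1_def y2_def)
  have th: "(x1\<^sup>2 + y1\<^sup>2 - (x2\<^sup>2 + y2\<^sup>2)) * (2 * (x1 * p2 + y1 * q2 + (p1 * x2 + q1 * y2)))
        - (2 * (x1 * x2 + y1 * y2)) * (2 * (x1 * p1 + y1 * q1) - 2 * (x2 * p2 + y2 * q2)) = (lam2 t - lam1 t)\<^sup>2 * \<theta>' t"
  proof -
    have "lam2 t - lam1 t = h t" using pt(24,25) by (simp add: h_def L1_def L2_def)
    thus ?thesis using W unfolding XX EE XE XX' EE' XE' by (simp add: algebra_simps)
  qed
  have u1'd: "u1' = \<beta> *\<^sub>R u2 t + (- a) *\<^sub>R n t"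
  proof -
    have "u1' = (u1' \<bullet> u1 t) *\<^sub>R u1 t + (u1' \<bullet> u2 t) *\<^sub>R u2 t + (u1' \<bullet> n t) *\<^sub>R n t" by (rule pt(16))
    moreover have "u1' \<bullet> u1 t = 0" using D1 by (simp add: inner_commute)
    moreover have "u1' \<bullet> n t = - a" using D5 by (simp add: a_def)
    ultimately show ?thesis by (simp add: \<beta>_def)
  qed
  have u2'd: "u2' = (- \<beta>) *\<^sub>R u1 t + (- b) *\<^sub>R n t"
  proof -
    have "u2' = (u2' \<bullet> u1 t) *\<^sub>R u1 t + (u2' \<bullet> u2 t) *\<^sub>R u2 t + (u2' \<bullet> n t) *\<^sub>R n t" by (rule pt(16))
    moreover have "u2' \<bullet> u2 t = 0" using D2 by (simp add: inner_commute)
    moreover have "u2' \<bullet> u1 t = - \<beta>" using D4 by (simp add: \<beta>_def inner_commute)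
    moreover have "u2' \<bullet> n t = - b" using D6 by (simp add: b_def)
    ultimately show ?thesis by simp
  qed
  have n'd: "n' = a *\<^sub>R u1 t + b *\<^sub>R u2 t"
  proof -
    have "n' = (n' \<bullet> u1 t) *\<^sub>R u1 t + (n' \<bullet> u2 t) *\<^sub>R u2 t + (n' \<bullet> n t) *\<^sub>R n t" by (rule pt(16))
    moreover have "n' \<bullet> n t = 0" using D3 by (simp add: inner_commute)
    ultimately show ?thesis by (simp add: a_def b_def inner_commute)
  qed
  have r1e: "r1 = - (x1 * a + y1 * b)"
  proof -
    have "X t \<bullet> n' = x1 * a + y1 * b" unfolding Xd by (simp add: inner_add_left a_def b_def)
    thus ?thesis using D7 by (simp add: r1_def)
  qed
  have r2e: "r2 = - (x2 * a + y2 * b)"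
  proof -
    have "E t \<bullet> n' = x2 * a + y2 * b" unfolding Ed by (simp add: inner_add_left a_def b_def)
    thus ?thesis using D8 by (simp add: r2_def)
  qed
  have D9': "(y1 * \<beta> + p1) * y1 + (- (x1 * \<beta>) + q1) * x1 + ((y2 * \<beta> + p2) * y2 + (- (x2 * \<beta>) + q2) * x2) = 0"
  proof -
    have "X t \<bullet> u1' = y1 * \<beta>" "X t \<bullet> u2' = - (x1 * \<beta>)" "E t \<bullet> u1' = y2 * \<beta>" "E t \<bullet> u2' = - (x2 * \<beta>)"
      unfolding Xd Ed u1'd u2'd by (simp_all add: inner_add_left inner_add_right inner_diff_right inner_minus_right ip)
    thus ?thesis using D9 by (simp add: x1_def[symmetric] y1_def[symmetric] x2_def[symmetric] y2_def[symmetric]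
        p1_def[symmetric] q1_def[symmetric] p2_def[symmetric] q2_def[symmetric])
  qed
  have trip: "\<And>A B C :: real^3. (A \<times> B) \<bullet> C = (C \<times> A) \<bullet> B" by (simp add: cross3_simps forall_3) 
  have cX: "u1 t \<times> X t = y1 *\<^sub>R n t" "u2 t \<times> X t = - (x1 *\<^sub>R n t)" "n t \<times> X t = x1 *\<^sub>R u2 t - y1 *\<^sub>R u1 t"
    unfolding Xd by (simp_all add: cross_add_right cross_mult_right ctab)
  have cE: "u1 t \<times> E t = y2 *\<^sub>R n t" "u2 t \<times> E t = - (x2 *\<^sub>R n t)" "n t \<times> E t = x2 *\<^sub>R u2 t - y2 *\<^sub>R u1 t"
    unfolding Ed by (simp_all add: cross_add_right cross_mult_right ctab)
  have Omt: "\<Omega> = X t \<times> X' t + E t \<times> E' t" by (rule Om[OF J(2)])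
  have rr: "n t \<bullet> X' t = r1" "n t \<bullet> E' t = r2" "u1 t \<bullet> X' t = p1" "u2 t \<bullet> X' t = q1"
    "u1 t \<bullet> E' t = p2" "u2 t \<bullet> E' t = q2"
    by (simp_all add: r1_def r2_def p1_def q1_def p2_def q2_def inner_commute)
  have g1t: "g1 t = y1 * r1 + y2 * r2"
    unfolding g1_def Omt inner_add_left trip[of "X t" "X' t" "u1 t"] trip[of "E t" "E' t" "u1 t"] cX cE
    by (simp add: inner_diff_left rr)
  have g2t: "g2 t = - (x1 * r1) - x2 * r2"
    unfolding g2_def Omt inner_add_left trip[of "X t" "X' t" "u2 t"] trip[of "E t" "E' t" "u2 t"] cX cE
    by (simp add: inner_diff_left rr)
  have g3t: "g3 t = x1 * q1 - y1 * p1 + (x2 * q2 - y2 * p2)"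
    unfolding g3_def Omt inner_add_left trip[of "X t" "X' t" "n t"] trip[of "E t" "E' t" "n t"] cX cE
    by (simp add: inner_diff_left rr)
  have Omd: "\<Omega> = g1 t *\<^sub>R u1 t + g2 t *\<^sub>R u2 t + g3 t *\<^sub>R n t"
    using pt(16)[of \<Omega>] by (simp add: g1_def g2_def g3_def)
  have dg1: "(g1 has_real_derivative \<Omega> \<bullet> u1') (at t)"
    using vd_inner[OF has_vector_derivative_const du1, of \<Omega>] unfolding g1_def by simp
  have dg2: "(g2 has_real_derivative \<Omega> \<bullet> u2') (at t)"
    using vd_inner[OF has_vector_derivative_const du2, of \<Omega>] unfolding g2_def by simp
  have dg3: "(g3 has_real_derivative \<Omega> \<bullet> n') (at t)"
    using vd_inner[OF has_vector_derivative_const dn, of \<Omega>] unfolding g3_def by simp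
  have e1: "\<Omega> \<bullet> u1' = g2 t * \<beta> - g3 t * a"
    by (subst Omd, subst u1'd) (simp add: inner_add_left inner_add_right inner_diff_right inner_minus_right ip)
  have e2: "\<Omega> \<bullet> u2' = - (g1 t * \<beta>) - g3 t * b"
    by (subst Omd, subst u2'd) (simp add: inner_add_left inner_add_right inner_diff_right inner_minus_right ip)
  have e3: "\<Omega> \<bullet> n' = g1 t * a + g2 t * b"
    by (subst Omd, subst n'd) (simp add: inner_add_left inner_add_right ip)
  have orth: "x1 * y1 + x2 * y2 = 0" using pt(23) by (simp add: x1_def y1_def x2_def y2_def)
  have lam1e: "lam1 t = y1\<^sup>2 + y2\<^sup>2" using pt(24) by (simp add: y1_def y2_def)
  have lam2e: "lam2 t = x1\<^sup>2 + x2\<^sup>2" using pt(25) by (simp add: x1_def x2_def)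
  have lpos: "lam1 t > 0" "lam2 t > 0" using pt(24,25,28,29) by auto
  have lam3e: "lam3 t = lam1 t + lam2 t" using pt(24,25,26,27) by simp
  have hnz: "lam2 t - lam1 t \<noteq> 0" using h_nz pt(24,25) by (simp add: h_def L1_def L2_def)
  have cp: "2 * (x1 * y2 - y1 * x2) = lam3 t * cos (\<phi> t)"
    using pt(31,32,26) by (simp add: x1_def y1_def x2_def y2_def)
  note fa = final_alg[OF orth lam1e lam2e lpos lam3e hnz r1e r2e g1t g2t g3t D9' th cp e1 e2 e3]
  have part1: "(g1 has_real_derivative
            g2 t * ((1 / lam3 t - 1 / lam2 t) * g3 t + 1/2 * \<theta>' t * cos (\<phi> t))) (at t)"
    using dg1 fa(1) by simp
  have part2: "(g2 has_real_derivative
            g1 t * ((1 / lam1 t - 1 / lam3 t) * g3 t - 1/2 * \<theta>' t * cos (\<phi> t))) (at t)"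
    using dg2 fa(2) by simp
  have part3: "(g3 has_real_derivative g1 t * g2 t * (1 / lam2 t - 1 / lam1 t)) (at t)"
    using dg3 fa(3) by simp
  have rho2: "(\<rho> t)\<^sup>2 = I t" using pt(37) by (simp add: \<rho>_def Is)
  have lam3r: "lam3 t = (\<rho> t)\<^sup>2" using pt(26) rho2 by simp
  have gap: "\<bar>lam2 t - lam1 t\<bar> = I t * sin (\<phi> t)"
  proof -
    have "sqrt ((lam2 t - lam1 t)\<^sup>2) = I t * sin (\<phi> t)" using pt(35) pt(36) pt(24) pt(25) by simp
    thus ?thesis by simp
  qed
  have sumI: "lam1 t + lam2 t = I t" using pt(24,25,27) by simp
  have setp: "{lam1 t, lam2 t} = {(\<rho> t)\<^sup>2 / 2 * (1 + sin (\<phi> t)), (\<rho> t)\<^sup>2 / 2 * (1 - sin (\<phi> t))}"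
  proof (cases "lam2 t \<ge> lam1 t")
    case True
    hence "lam2 t - lam1 t = I t * sin (\<phi> t)" using gap by simp
    hence "lam2 t = (\<rho> t)\<^sup>2 / 2 * (1 + sin (\<phi> t))" "lam1 t = (\<rho> t)\<^sup>2 / 2 * (1 - sin (\<phi> t))"
      using sumI rho2 by (simp_all add: field_simps)
    thus ?thesis by auto
  next
    case False
    hence "lam1 t - lam2 t = I t * sin (\<phi> t)" using gap by simp
    hence "lam1 t = (\<rho> t)\<^sup>2 / 2 * (1 + sin (\<phi> t))" "lam2 t = (\<rho> t)\<^sup>2 / 2 * (1 - sin (\<phi> t))"
      using sumI rho2 by (simp_all add: field_simps)
    thus ?thesis by auto
  qed
  show ?thesis using part1 part2 part3 setp lam3r by blast
qed


end
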